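(* Define the following equivalence relation on $SU(2)$: $g_1\approx g_2$ if there exist $(a_1,b_1,c_1),(a_2,b_2,c_2)$ such that $g_1=e^{-b_1p_2}e^{a_1p_1}e^{c_1p_2}$, $g_2=e^{-b_2p_2}e^{a_2p_1}e^{c_2p_2}$ and $a_1=a_2$, $b_1=b_2$, $c_1=c_2 \mod \pi$. Then the 3-D manifold $SU(2)/\approx$ is the lens space $L(4,1)$.
   Context: $SU(2)=\{\begin{pmatrix}\alpha&\beta\\-\bar\beta&\bar\alpha\end{pmatrix}\in \mathrm{Mat}(2,\mathbb{C}) : |\alpha|^2+|\beta|^2=1\}$, with Lie algebra basis $p_1=\frac12\begin{pmatrix}0&1\\-1&0\end{pmatrix}$, $p_2=\frac12\begin{pmatrix}0&i\\i&0\end{pmatrix}$, $k=\frac12\begin{pmatrix}i&0\\0&-i\end{pmatrix}$. Every $g\in SU(2)$ can be written as $g=e^{-bp_2}e^{ap_1}e^{cp_2}$ with $a\in[0,\pi]$, $b\in[0,2\pi)$, $c\in\mathbb{R}/(4\pi)$; $a$ is uniquely determined by $g$, and $b,c$ are uniquely determined when $a\neq 0,\pi$ (for $a=0$ only $c-b \mod 4\pi$ is determined, for $a=\pi$ only $c+b\mod 4\pi$). The lens space $L(p,q)$ ($p,q$ coprime nonzero integers) is $S^3/\sim$, where $S^3=\{(x_1,x_2)\in\mathbb{C}^2 : |x_1|^2+|x_2|^2=1\}$ and $(x_1,x_2)\sim(y_1,y_2)$ iff there is $\omega\in\mathbb{C}$ with $\omega^p=1$ and $x_1=\omega y_1$,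 $x_2=\omega^q y_2$. *)

theory Defs
  imports "HOL-Analysis.Analysis"
begin

type_synonym cmat2 = "complex^2^2"

definition mat2 :: "complex \<Rightarrow> complex \<Rightarrow> complex \<Rightarrow> complex \<Rightarrow> cmat2" where
  "mat2 a b c d = vector [vector [a, b], vector [c, d]]"

fun mpow :: "cmat2 \<Rightarrow> nat \<Rightarrow> cmat2" where
  "mpow A 0 = mat 1"
| "mpow A (Suc n) = A ** mpow A n"

definition mexp :: "cmat2 \<Rightarrow> cmat2" where
  "mexp A = (\<Sum>n. (1 / fact n) *\<^sub>R mpow A n)"

definition SU2 :: "cmat2 set" where
  "SU2 = {mat2 \<alpha> \<beta> (- cnj \<beta>) (cnj \<alpha>) | \<alpha> \<beta>. (cmod \<alpha>)\<^sup>2 + (cmod \<beta>)\<^sup>2 = 1}"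

definition p1 :: cmat2 where "p1 = mat2 0 (1/2) (-1/2) 0"
definition p2 :: cmat2 where "p2 = mat2 0 (\<i>/2) (\<i>/2) 0"
definition kk :: cmat2 where "kk = mat2 (\<i>/2) 0 0 (-\<i>/2)"

definition euler :: "real \<Rightarrow> real \<Rightarrow> real \<Rightarrow> cmat2" where
  "euler a b c = mexp ((- b) *\<^sub>R p2) ** mexp (a *\<^sub>R p1) ** mexp (c *\<^sub>R p2)"

text \<open>Parameter ranges: a in [0,pi], b in [0,2pi), c real (taken mod 4pi, which is harmless).\<close>
definition approx_rel :: "cmat2 \<Rightarrow> cmat2 \<Rightarrow> bool" where
  "approx_rel g1 g2 \<longleftrightarrow> (\<exists>a1 b1 c1 a2 b2 c2.
      a1 \<in> {0..pi} \<and> b1 \<in> {0..<2*pi} \<and> a2 \<in> {0..pi} \<and> b2 \<in> {0..<2*pi} \<and>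
      g1 = euler a1 b1 c1 \<and> g2 = euler a2 b2 c2 \<and>
      a1 = a2 \<and> b1 = b2 \<and> (\<exists>k::int. c1 - c2 = of_int k * pi))"

definition S3 :: "(complex \<times> complex) set" where
  "S3 = {(x1, x2). (cmod x1)\<^sup>2 + (cmod x2)\<^sup>2 = 1}"

definition lens_rel :: "int \<Rightarrow> int \<Rightarrow> complex \<times> complex \<Rightarrow> complex \<times> complex \<Rightarrow> bool" where
  "lens_rel p q x y \<longleftrightarrow> (\<exists>\<omega>::complex. \<omega> powi p = 1 \<and>
      fst x = \<omega> * fst y \<and> snd x = \<omega> powi q * snd y)"

definition quot_top :: "'a topology \<Rightarrow> ('a \<Rightarrow> 'a \<Rightarrow> bool) \<Rightarrow> 'a set topology" where
  "quot_top X R = topology (\<lambda>U. U \<subseteq> (\<lambda>x. {y \<in> topspace X. R x y}) ` topspace X \<and>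
      openin X {x \<in> topspace X. {y \<in> topspace X. R x y} \<in> U})"

definition lens_space :: "int \<Rightarrow> int \<Rightarrow> (complex \<times> complex) set topology" where
  "lens_space p q = quot_top (subtopology euclidean S3) (lens_rel p q)"

end

theory Submission
  imports Defs
begin

lemma mat2_nth [simp]: "mat2 a b c d $ 1 $ 1 = a" "mat2 a b c d $ 1 $ 2 = b"
  "mat2 a b c d $ 2 $ 1 = c" "mat2 a b c d $ 2 $ 2 = d"
  by (simp_all add: mat2_def)

lemma mat2_eq_iff: "mat2 a b c d = mat2 a' b' c' d' \<longleftrightarrow> a = a' \<and> b = b' \<and> c = c' \<and> d = d'"
  by (auto simp: vec_eq_iff forall_2 mat2_def)

lemma mat2_mult: "mat2 a b c d ** mat2 e f g h = mat2 (a*e+b*g) (a*f+b*h) (c*e+d*g) (c*f+d*h)"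
  by (simp add: vec_eq_iff forall_2 matrix_matrix_mult_def sum_2 mat2_def)

lemma mat2_scaleR: "r *\<^sub>R mat2 a b c d = mat2 (r *\<^sub>R a) (r *\<^sub>R b) (r *\<^sub>R c) (r *\<^sub>R d)"
  by (simp add: vec_eq_iff forall_2 mat2_def)

lemma mat2_add: "mat2 a b c d + mat2 e f g h = mat2 (a+e) (b+f) (c+g) (d+h)"
  by (simp add: vec_eq_iff forall_2 mat2_def)

lemma mat2_one: "mat 1 = mat2 1 0 0 1"
  by (simp add: vec_eq_iff forall_2 mat2_def mat_def)

lemma mat2_uminus: "- mat2 a b c d = mat2 (-a) (-b) (-c) (-d)"
  by (simp add: vec_eq_iff forall_2 mat2_def)

lemma mult_scaleR_r: "(A::cmat2) ** (r *\<^sub>R B) = r *\<^sub>R (A ** B)"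
  by (simp add: vec_eq_iff forall_2 matrix_matrix_mult_def sum_2 algebra_simps)

lemma mult_scaleR_l: "(r *\<^sub>R A::cmat2) ** B = r *\<^sub>R (A ** B)"
  by (simp add: vec_eq_iff forall_2 matrix_matrix_mult_def sum_2 algebra_simps)

lemma mpow_sq:
  assumes Q: "Q ** Q = - mat 1"
  shows "mpow Q n = (if even n then ((-1)^(n div 2)) *\<^sub>R mat 1 else ((-1::real)^(n div 2)) *\<^sub>R Q)"
proof (induction n)
  case 0 then show ?case by simp
next
  case (Suc n)
  show ?case
  proof (cases "even n")
    case True
    then show ?thesis using Suc by (simp add: mult_scaleR_r)
  next
    case False
    then have "Suc n div 2 = Suc (n div 2)" by presburger
    then show ?thesis using Suc False by (simp add: mult_scaleR_r Q)
  qed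
qed

lemma mpow_scale: "mpow (s *\<^sub>R Q) n = (s ^ n) *\<^sub>R mpow Q n"
  by (induction n) (simp_all add: mult_scaleR_r mult_scaleR_l)

lemma mexp_sq:
  assumes Q: "Q ** Q = - mat 1"
  shows "mexp (s *\<^sub>R Q) = cos s *\<^sub>R mat 1 + sin s *\<^sub>R Q"
proof -
  have tm: "(1 / fact n) *\<^sub>R mpow (s *\<^sub>R Q) n =
     (cos_coeff n * s ^ n) *\<^sub>R mat 1 + (sin_coeff n * s ^ n) *\<^sub>R Q" for n
  proof (cases "even n")
    case True
    then show ?thesis by (simp add: mpow_scale mpow_sq[OF Q] cos_coeff_def sin_coeff_def)
  next
    case False
    then have "(n - Suc 0) div 2 = n div 2" by presburger
    then show ?thesis using False by (simp add: mpow_scale mpow_sq[OF Q] cos_coeff_def sin_coeff_def)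
  qed
  have "(\<lambda>n. (cos_coeff n * s ^ n) *\<^sub>R mat 1 + (sin_coeff n * s ^ n) *\<^sub>R Q) sums
        (cos s *\<^sub>R mat 1 + sin s *\<^sub>R (Q::cmat2))"
    using cos_converges[of s] sin_converges[of s]
    by (intro sums_add sums_scaleR_left) simp_all
  then have "(\<lambda>n. (1 / fact n) *\<^sub>R mpow (s *\<^sub>R Q) n) sums (cos s *\<^sub>R mat 1 + sin s *\<^sub>R Q)"
    by (simp only: tm)
  then show ?thesis unfolding mexp_def by (rule sums_unique[symmetric])
qed


definition E :: "real \<Rightarrow> cmat2" where
  "E t = mat2 (cos (t/2)) (\<i> * sin (t/2)) (\<i> * sin (t/2)) (cos (t/2))"

definition Rm :: "real \<Rightarrow> cmat2" where
  "Rm t = mat2 (cos (t/2)) (sin (t/2)) (- sin (t/2)) (cos (t/2))"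

lemma mexp_p2: "mexp (t *\<^sub>R p2) = E t"
proof -
  have h2: "p2 = (1/2) *\<^sub>R mat2 0 \<i> \<i> 0"
    unfolding p2_def mat2_scaleR by (simp add: scaleR_conv_of_real)
  have eq: "t *\<^sub>R p2 = (t/2) *\<^sub>R mat2 0 \<i> \<i> 0" unfolding h2 scaleR_scaleR by simp
  have sq: "mat2 0 \<i> \<i> 0 ** mat2 0 \<i> \<i> 0 = - mat 1"
    by (simp add: mat2_mult mat2_one mat2_uminus)
  have "mexp (t *\<^sub>R p2) = mexp ((t/2) *\<^sub>R mat2 0 \<i> \<i> 0)" by (simp only: eq)
  also have "\<dots> = cos (t/2) *\<^sub>R mat 1 + sin (t/2) *\<^sub>R mat2 0 \<i> \<i> 0" by (rule mexp_sq[OF sq])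
  also have "\<dots> = E t" unfolding mat2_one mat2_scaleR mat2_add E_def
    by (simp add: scaleR_conv_of_real mult.commute)
  finally show ?thesis .
qed

lemma mexp_p1: "mexp (t *\<^sub>R p1) = Rm t"
proof -
  have h1: "p1 = (1/2) *\<^sub>R mat2 0 1 (-1) 0"
    unfolding p1_def mat2_scaleR by (simp add: scaleR_conv_of_real)
  have eq: "t *\<^sub>R p1 = (t/2) *\<^sub>R mat2 0 1 (-1) 0" unfolding h1 scaleR_scaleR by simp
  have sq: "mat2 0 1 (-1) 0 ** mat2 0 1 (-1) 0 = - mat 1"
    by (simp add: mat2_mult mat2_one mat2_uminus)
  have "mexp (t *\<^sub>R p1) = mexp ((t/2) *\<^sub>R mat2 0 1 (-1) 0)" by (simp only: eq)
  also have "\<dots> = cos (t/2) *\<^sub>R mat 1 + sin (t/2) *\<^sub>R mat2 0 1 (-1) 0" by (rule mexp_sq[OF sq])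
  also have "\<dots> = Rm t" unfolding mat2_one mat2_scaleR mat2_add Rm_def
    by (simp add: scaleR_conv_of_real mult.commute)
  finally show ?thesis .
qed

definition eA :: "real \<Rightarrow> real \<Rightarrow> real \<Rightarrow> complex" where
  "eA a b c = Complex (cos (a/2) * cos ((b-c)/2)) (sin (a/2) * sin ((b+c)/2))"
definition eB :: "real \<Rightarrow> real \<Rightarrow> real \<Rightarrow> complex" where
  "eB a b c = Complex (sin (a/2) * cos ((b+c)/2)) (- cos (a/2) * sin ((b-c)/2))"

lemma euler_formula: "euler a b c = mat2 (eA a b c) (eB a b c) (- cnj (eB a b c)) (cnj (eA a b c))"
proof -
  have "euler a b c = E (-b) ** Rm a ** E c"
    unfolding euler_def mexp_p1 mexp_p2[symmetric] by simp
  also have "\<dots> = mat2 (eA a b c) (eB a b c) (- cnj (eB a b c)) (cnj (eA a b c))"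
    unfolding E_def Rm_def mat2_mult mat2_eq_iff eA_def eB_def
    by (simp add: complex_eq_iff diff_divide_distrib add_divide_distrib cos_add sin_add cos_diff sin_diff algebra_simps)
  finally show ?thesis .
qed


lemma E_add: "E s ** E t = E (s + t)"
  unfolding E_def mat2_mult mat2_eq_iff
  by (simp add: complex_eq_iff add_divide_distrib cos_add sin_add algebra_simps)

lemma euler_shift: "euler a b (c + t) = euler a b c ** E t"
  unfolding euler_def mexp_p2 by (simp add: E_add[symmetric] matrix_mul_assoc)

definition phi :: "cmat2 \<Rightarrow> complex \<times> complex" where
  "phi M = ((M$1$1 + M$1$2) / of_real (sqrt 2), cnj (M$1$1 - M$1$2) / of_real (sqrt 2))"

lemma cis_conv: "cis x = of_real (cos x) + \<i> * of_real (sin x)"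
  by (simp add: complex_eq_iff)

lemma phi_E: "phi (M ** E t) = (cis (t/2) * fst (phi M), cis (t/2) * snd (phi M))"
proof -
  have 1: "(M ** E t)$1$1 = M$1$1 * cos (t/2) + M$1$2 * (\<i> * sin (t/2))"
    and 2: "(M ** E t)$1$2 = M$1$1 * (\<i> * sin (t/2)) + M$1$2 * cos (t/2)"
    by (simp_all add: matrix_matrix_mult_def sum_2 E_def)
  show ?thesis unfolding phi_def 1 2 cis_conv
    by (simp add: algebra_simps)
qed

lemma norm_rot: "(cmod (\<alpha> * complex_of_real C + \<beta> * (\<i> * complex_of_real S)))\<^sup>2 +
   (cmod (\<alpha> * (\<i> * complex_of_real S) + \<beta> * complex_of_real C))\<^sup>2
   = ((cmod \<alpha>)\<^sup>2 + (cmod \<beta>)\<^sup>2) * (C\<^sup>2 + S\<^sup>2)"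
  unfolding cmod_power2 by (simp add: power2_eq_square algebra_simps)

lemma SU2_E: assumes "g \<in> SU2" shows "g ** E t \<in> SU2"
proof -
  obtain \<alpha> \<beta> where g: "g = mat2 \<alpha> \<beta> (- cnj \<beta>) (cnj \<alpha>)" and n: "(cmod \<alpha>)\<^sup>2 + (cmod \<beta>)\<^sup>2 = 1"
    using assms unfolding SU2_def by blast
  let ?C = "complex_of_real (cos (t/2))" and ?S = "complex_of_real (sin (t/2))"
  let ?a = "\<alpha> * ?C + \<beta> * (\<i> * ?S)" and ?b = "\<alpha> * (\<i> * ?S) + \<beta> * ?C"
  have eq: "g ** E t = mat2 ?a ?b (- cnj ?b) (cnj ?a)"
    unfolding g E_def mat2_mult mat2_eq_iff by (simp add: algebra_simps)
  have "(cmod ?a)\<^sup>2 + (cmod ?b)\<^sup>2 = ((cmod \<alpha>)\<^sup>2 + (cmod \<beta>)\<^sup>2) * ((cos (t/2))\<^sup>2 + (sin (t/2))\<^sup>2)"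
    by (rule norm_rot)
  then have "(cmod ?a)\<^sup>2 + (cmod ?b)\<^sup>2 = 1" using n by simp
  then show ?thesis unfolding eq SU2_def by blast
qed


lemma euler_exists:
  assumes "g \<in> SU2"
  shows "\<exists>a b c. a \<in> {0..pi} \<and> b \<in> {0..<2*pi} \<and> g = euler a b c"
proof -
  obtain \<alpha> \<beta> where g: "g = mat2 \<alpha> \<beta> (- cnj \<beta>) (cnj \<alpha>)" and n: "(cmod \<alpha>)\<^sup>2 + (cmod \<beta>)\<^sup>2 = 1"
    using assms unfolding SU2_def by blast
  define z1 where "z1 = Complex (Re \<alpha>) (- Im \<beta>)"
  define z2 where "z2 = Complex (Re \<beta>) (Im \<alpha>)"
  define r1 where "r1 = cmod z1"
  define r2 where "r2 = cmod z2"
  define u where "u = Arg z1"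
  define v where "v = Arg z2"
  have r: "r1\<^sup>2 + r2\<^sup>2 = 1" using n unfolding r1_def r2_def z1_def z2_def cmod_power2 by simp
  have "rcis r1 u = z1" by (simp add: r1_def u_def rcis_cmod_Arg)
  from arg_cong[OF this, of Re] arg_cong[OF this, of Im]
  have hu: "r1 * cos u = Re \<alpha>" "r1 * sin u = - Im \<beta>" by (simp_all add: z1_def)
  have "rcis r2 v = z2" by (simp add: r2_def v_def rcis_cmod_Arg)
  from arg_cong[OF this, of Re] arg_cong[OF this, of Im]
  have hv: "r2 * cos v = Re \<beta>" "r2 * sin v = Im \<alpha>" by (simp_all add: z2_def)
  have r10: "0 \<le> r1" "0 \<le> r2" by (simp_all add: r1_def r2_def)
  have r11: "r1 \<le> 1"
  proof -
    have "0 \<le> r2\<^sup>2" by simp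
    then have "r1\<^sup>2 \<le> 1\<^sup>2" using r by (simp only: power_one)
    then show ?thesis by (rule power2_le_imp_le) simp
  qed
  define h where "h = arccos r1"
  have ch: "cos h = r1" unfolding h_def using r10 r11 by simp
  have e12: "1 - r1\<^sup>2 = r2\<^sup>2" using r by linarith
  have "sin h = sqrt (1 - r1\<^sup>2)" unfolding h_def using r10 r11 by (simp add: sin_arccos)
  then have sh: "sin h = r2" unfolding e12 using r10 by simp
  have h0: "0 \<le> h" unfolding h_def using r10 r11 by (simp add: arccos_lbound)
  have h1: "h \<le> pi/2" unfolding h_def using arccos_le_pi2[OF r10(1) r11] .
  define k where "k = \<lfloor>(u + v) / (2*pi)\<rfloor>"
  have k1: "of_int k * (2*pi) \<le> u + v" unfolding k_def by (rule floor_divide_lower) simp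
  have k2: "u + v < (of_int k + 1) * (2*pi)" unfolding k_def by (rule floor_divide_upper) simp
  define a where "a = 2 * h"
  define b where "b = u + v - 2*pi * of_int k"
  define c where "c = v - u + 2*pi * of_int k"
  have a2: "a/2 = h" by (simp add: a_def)
  have bc1: "(b - c)/2 = u - 2*pi * of_int k" by (simp add: b_def c_def field_simps)
  have bc2: "(b + c)/2 = v" by (simp add: b_def c_def field_simps)
  have cu: "cos (u - 2*pi * of_int k) = cos u" and su: "sin (u - 2*pi * of_int k) = sin u"
    by (simp_all add: cos_diff sin_diff)
  have "eA a b c = \<alpha>" unfolding eA_def a2 bc1 bc2 cu su ch sh
    using hu hv by (simp add: complex_eq_iff)
  moreover have "eB a b c = \<beta>" unfolding eB_def a2 bc1 bc2 cu su ch sh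
    using hu hv by (simp add: complex_eq_iff)
  ultimately have "g = euler a b c" unfolding euler_formula g by simp
  moreover have "a \<in> {0..pi}" using h0 h1 by (simp add: a_def)
  moreover have "b \<in> {0..<2*pi}" using k1 k2 by (simp add: b_def algebra_simps)
  ultimately show ?thesis by blast
qed

lemma phi_SU2: assumes "g \<in> SU2" shows "phi g \<in> S3"
proof -
  obtain \<alpha> \<beta> where g: "g = mat2 \<alpha> \<beta> (- cnj \<beta>) (cnj \<alpha>)" and n: "(cmod \<alpha>)\<^sup>2 + (cmod \<beta>)\<^sup>2 = 1"
    using assms unfolding SU2_def by blast
  have "(cmod ((\<alpha> + \<beta>) / of_real (sqrt 2)))\<^sup>2 + (cmod (cnj (\<alpha> - \<beta>) / of_real (sqrt 2)))\<^sup>2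
      = ((cmod \<alpha>)\<^sup>2 + (cmod \<beta>)\<^sup>2)"
    unfolding cmod_power2 by (simp add: power2_eq_square field_simps)
  then show ?thesis using n unfolding phi_def g S3_def by simp
qed

lemma phi_inj: assumes "g \<in> SU2" "h \<in> SU2" "phi g = phi h" shows "g = h"
proof -
  obtain \<alpha> \<beta> where g: "g = mat2 \<alpha> \<beta> (- cnj \<beta>) (cnj \<alpha>)"
    using assms unfolding SU2_def by blast
  obtain \<alpha>' \<beta>' where h: "h = mat2 \<alpha>' \<beta>' (- cnj \<beta>') (cnj \<alpha>')"
    using assms unfolding SU2_def by blast
  have e1: "\<alpha> + \<beta> = \<alpha>' + \<beta>'" and e2: "cnj (\<alpha> - \<beta>) = cnj (\<alpha>' - \<beta>')"
    using assms(3) unfolding phi_def g h by simp_all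
  from e2 have "\<alpha> - \<beta> = \<alpha>' - \<beta>'" by (metis complex_cnj_cancel_iff)
  note e3 = this
  have "\<alpha> = ((\<alpha>+\<beta>)+(\<alpha>-\<beta>))/2" "\<alpha>' = ((\<alpha>'+\<beta>')+(\<alpha>'-\<beta>'))/2" by (simp_all add: field_simps)
  then have a: "\<alpha> = \<alpha>'" using e1 e3 by simp
  then have "\<beta> = \<beta>'" using e1 by simp
  note a this
  then show ?thesis unfolding g h by simp
qed


definition psi :: "complex \<times> complex \<Rightarrow> cmat2" where
  "psi x = mat2 ((fst x + cnj (snd x)) / of_real (sqrt 2)) ((fst x - cnj (snd x)) / of_real (sqrt 2))
     (- cnj ((fst x - cnj (snd x)) / of_real (sqrt 2))) (cnj ((fst x + cnj (snd x)) / of_real (sqrt 2)))"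

lemma mat2_chi: "mat2 a b c d = (\<chi> i j. if i = 1 then (if j = 1 then a else b) else (if j = 1 then c else d))"
  by (simp add: vec_eq_iff forall_2 mat2_def)

lemma continuous_on_mat2:
  assumes "continuous_on S f1" "continuous_on S f2" "continuous_on S f3" "continuous_on S f4"
  shows "continuous_on S (\<lambda>x. mat2 (f1 x) (f2 x) (f3 x) (f4 x))"
  unfolding mat2_chi
  apply (intro continuous_on_vec_lambda)
  subgoal for i j by (cases "i = 1"; cases "j = 1") (simp_all add: assms)
  done

lemma sqrt2c: "complex_of_real (sqrt 2) * complex_of_real (sqrt 2) = 2"
  by (simp only: of_real_mult[symmetric] real_sqrt_mult_self) simp

lemma psi_S3: assumes "x \<in> S3" shows "psi x \<in> SU2"
proof -
  obtain x1 x2 where x: "x = (x1, x2)" by (cases x)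
  have n: "(cmod x1)\<^sup>2 + (cmod x2)\<^sup>2 = 1" using assms unfolding x S3_def by simp
  have "(cmod ((x1 + cnj x2) / of_real (sqrt 2)))\<^sup>2 + (cmod ((x1 - cnj x2) / of_real (sqrt 2)))\<^sup>2
      = (cmod x1)\<^sup>2 + (cmod x2)\<^sup>2"
    unfolding cmod_power2 by (simp add: power2_eq_square field_simps)
  then have nn: "(cmod ((x1 + cnj x2) / of_real (sqrt 2)))\<^sup>2 + (cmod ((x1 - cnj x2) / of_real (sqrt 2)))\<^sup>2 = 1"
    using n by (rule trans)
  have "psi x = mat2 ((x1 + cnj x2) / of_real (sqrt 2)) ((x1 - cnj x2) / of_real (sqrt 2))
     (- cnj ((x1 - cnj x2) / of_real (sqrt 2))) (cnj ((x1 + cnj x2) / of_real (sqrt 2)))"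
    unfolding psi_def x by (simp only: fst_conv snd_conv)
  then show ?thesis unfolding SU2_def mem_Collect_eq
    by (intro exI[of _ "(x1 + cnj x2) / of_real (sqrt 2)"] exI[of _ "(x1 - cnj x2) / of_real (sqrt 2)"] conjI nn)
qed

lemma phi_psi: "phi (psi x) = x"
proof -
  obtain x1 x2 where x: "x = (x1, x2)" by (cases x)
  have "(x1 + cnj x2) / complex_of_real (sqrt 2) + (x1 - cnj x2) / complex_of_real (sqrt 2) = 2 * x1 / complex_of_real (sqrt 2)"
    by (simp add: field_simps)
  moreover have "(x1 + cnj x2) / complex_of_real (sqrt 2) - (x1 - cnj x2) / complex_of_real (sqrt 2) = 2 * cnj x2 / complex_of_real (sqrt 2)"
    by (simp add: field_simps)
  ultimately show ?thesis unfolding phi_def psi_def x using sqrt2c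
    by (simp add: field_simps)
qed

lemma psi_phi: assumes "g \<in> SU2" shows "psi (phi g) = g"
  using phi_inj[OF psi_S3[OF phi_SU2[OF assms]] assms] phi_psi by simp

lemma homeo_phi: "homeomorphic_maps (top_of_set SU2) (top_of_set S3) phi psi"
  unfolding homeomorphic_maps_def
proof (intro conjI ballI)
  have "continuous_on SU2 phi" unfolding phi_def by (intro continuous_intros) auto
  then show "continuous_map (top_of_set SU2) (top_of_set S3) phi"
    using phi_SU2 by auto
  have "continuous_on S3 psi" unfolding psi_def by (intro continuous_on_mat2 continuous_intros) auto
  then show "continuous_map (top_of_set S3) (top_of_set SU2) psi"
    using psi_S3 by auto
next
  fix g assume "g \<in> topspace (top_of_set SU2)"
  then show "psi (phi g) = g" using psi_phi by simp
next
  fix x assume "x \<in> topspace (top_of_set S3)"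
  then show "phi (psi x) = x" using phi_psi by simp
qed

lemma istop_gen: "istopology (\<lambda>U. U \<subseteq> A \<and> openin X {x \<in> topspace X. c x \<in> U})"
  unfolding istopology_def
proof (rule conjI; intro allI impI)
  fix S T
  assume H1: "S \<subseteq> A \<and> openin X {x \<in> topspace X. c x \<in> S}" and H2: "T \<subseteq> A \<and> openin X {x \<in> topspace X. c x \<in> T}"
  have eq: "{x \<in> topspace X. c x \<in> S \<inter> T} =
       {x \<in> topspace X. c x \<in> S} \<inter> {x \<in> topspace X. c x \<in> T}" by blast
  have "openin X {x \<in> topspace X. c x \<in> S \<inter> T}"
    unfolding eq using H1 H2 by (intro openin_Int) simp_all
  then show "S \<inter> T \<subseteq> A \<and> openin X {x \<in> topspace X. c x \<in> S \<inter> T}" using H1 H2 by blast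
next
  fix K
  assume K: "\<forall>S\<in>K. S \<subseteq> A \<and> openin X {x \<in> topspace X. c x \<in> S}"
  have eq: "{x \<in> topspace X. c x \<in> \<Union>K} = (\<Union>S\<in>K. {x \<in> topspace X. c x \<in> S})" by blast
  have "openin X {x \<in> topspace X. c x \<in> \<Union>K}"
    unfolding eq using K by (intro openin_Union) blast
  then show "\<Union>K \<subseteq> A \<and> openin X {x \<in> topspace X. c x \<in> \<Union>K}" using K by blast
qed

lemma quot_open:
  "openin (quot_top X R) U \<longleftrightarrow> U \<subseteq> (\<lambda>x. {y \<in> topspace X. R x y}) ` topspace X \<and>
      openin X {x \<in> topspace X. {y \<in> topspace X. R x y} \<in> U}"
  unfolding quot_top_def using istop_gen[of "(\<lambda>x. {y \<in> topspace X. R x y}) ` topspace X" X "\<lambda>x. {y \<in> topspace X. R x y}"]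
  by simp

lemma quot_topspace:
  "topspace (quot_top X R) = (\<lambda>x. {y \<in> topspace X. R x y}) ` topspace X"
proof -
  let ?c = "\<lambda>x. {y \<in> topspace X. R x y}"
  have e: "{x \<in> topspace X. ?c x \<in> ?c ` topspace X} = topspace X"
    by auto
  have o: "openin (quot_top X R) (?c ` topspace X)"
    unfolding quot_open e by simp
  have s: "\<And>U. openin (quot_top X R) U \<Longrightarrow> U \<subseteq> ?c ` topspace X"
    unfolding quot_open by simp
  show ?thesis
    using openin_subset[OF o] s[OF openin_topspace] by blast
qed

lemma quot_cont:
  assumes h: "homeomorphic_maps X Y f g"
    and RS: "\<And>x y. x \<in> topspace X \<Longrightarrow> y \<in> topspace X \<Longrightarrow> R x y \<longleftrightarrow> S (f x) (f y)"
  shows "continuous_map (quot_top X R) (quot_top Y S) (image f)"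
proof -
  have cf: "continuous_map X Y f" and fg: "\<And>y. y \<in> topspace Y \<Longrightarrow> f (g y) = y"
    and gf: "\<And>x. x \<in> topspace X \<Longrightarrow> g (f x) = x" and cg: "continuous_map Y X g"
    using h unfolding homeomorphic_maps_def by blast+
  have fX: "\<And>x. x \<in> topspace X \<Longrightarrow> f x \<in> topspace Y"
    using cf unfolding continuous_map_def by blast
  have gY: "\<And>x. x \<in> topspace Y \<Longrightarrow> g x \<in> topspace X"
    using cg unfolding continuous_map_def by blast
  have cls: "f ` {y \<in> topspace X. R x y} = {y \<in> topspace Y. S (f x) y}" if x: "x \<in> topspace X" for x
  proof
    show "f ` {y \<in> topspace X. R x y} \<subseteq> {y \<in> topspace Y. S (f x) y}"
    proof
      fix z assume "z \<in> f ` {y \<in> topspace X. R x y}"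
      then obtain y where y: "y \<in> topspace X" "R x y" "z = f y" by blast
      then show "z \<in> {y \<in> topspace Y. S (f x) y}" using RS[OF x y(1)] fX by simp
    qed
    show "{y \<in> topspace Y. S (f x) y} \<subseteq> f ` {y \<in> topspace X. R x y}"
    proof
      fix y assume y: "y \<in> {y \<in> topspace Y. S (f x) y}"
      then have y1: "y \<in> topspace Y" "S (f x) y" by simp_all
      have "R x (g y)" using RS[OF x gY[OF y1(1)]] fg[OF y1(1)] y1(2) by simp
      then have "g y \<in> {y \<in> topspace X. R x y}" using gY[OF y1(1)] by simp
      then show "y \<in> f ` {y \<in> topspace X. R x y}" using fg[OF y1(1)] by (metis image_eqI)
    qed
  qed
  show ?thesis
    unfolding continuous_map_def
  proof (intro conjI allI impI)
    show "image f \<in> topspace (quot_top X R) \<rightarrow> topspace (quot_top Y S)"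
    proof
      fix C assume "C \<in> topspace (quot_top X R)"
      then obtain x where x: "x \<in> topspace X" "C = {y \<in> topspace X. R x y}"
        unfolding quot_topspace by blast
      then show "f ` C \<in> topspace (quot_top Y S)"
        unfolding quot_topspace using cls[OF x(1)] fX[OF x(1)] by simp
    qed
  next
    fix V assume V: "openin (quot_top Y S) V"
    then have Vo: "openin Y {y \<in> topspace Y. {z \<in> topspace Y. S y z} \<in> V}" 
      unfolding quot_open by blast
    have eq: "{x \<in> topspace X. {y \<in> topspace X. R x y} \<in> {C \<in> topspace (quot_top X R). f ` C \<in> V}}
      = {x \<in> topspace X. f x \<in> {y \<in> topspace Y. {z \<in> topspace Y. S y z} \<in> V}}"
    proof (rule Collect_cong, rule conj_cong, rule refl)
      fix x assume x: "x \<in> topspace X"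
      have "{y \<in> topspace X. R x y} \<in> topspace (quot_top X R)"
        unfolding quot_topspace using x by blast
      then show "({y \<in> topspace X. R x y} \<in> {C \<in> topspace (quot_top X R). f ` C \<in> V}) =
          (f x \<in> {y \<in> topspace Y. {z \<in> topspace Y. S y z} \<in> V})"
        using cls[OF x] fX[OF x] by simp
    qed
    have sub: "{C \<in> topspace (quot_top X R). f ` C \<in> V} \<subseteq> (\<lambda>x. {y \<in> topspace X. R x y}) ` topspace X"
      unfolding quot_topspace by blast
    have "openin X {x \<in> topspace X. f x \<in> {y \<in> topspace Y. {z \<in> topspace Y. S y z} \<in> V}}"
      using cf Vo unfolding continuous_map_def by blast
    then show "openin (quot_top X R) {C \<in> topspace (quot_top X R). f ` C \<in> V}"
      unfolding quot_open using eq sub by simp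
  qed
qed

lemma quot_homeo:
  assumes h: "homeomorphic_maps X Y f g"
    and RS: "\<And>x y. x \<in> topspace X \<Longrightarrow> y \<in> topspace X \<Longrightarrow> R x y \<longleftrightarrow> S (f x) (f y)"
  shows "quot_top X R homeomorphic_space quot_top Y S"
proof -
  have h': "homeomorphic_maps Y X g f" using h homeomorphic_maps_sym by blast
  have fg: "\<And>y. y \<in> topspace Y \<Longrightarrow> f (g y) = y"
    and gf: "\<And>x. x \<in> topspace X \<Longrightarrow> g (f x) = x" and cg: "continuous_map Y X g"
    using h unfolding homeomorphic_maps_def by blast+
  have gY: "\<And>x. x \<in> topspace Y \<Longrightarrow> g x \<in> topspace X"
    using cg unfolding continuous_map_def by blast
  have SR: "S x y \<longleftrightarrow> R (g x) (g y)" if "x \<in> topspace Y" "y \<in> topspace Y" for x y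
    using RS[OF gY[OF that(1)] gY[OF that(2)]] fg[OF that(1)] fg[OF that(2)] by simp
  have "homeomorphic_maps (quot_top X R) (quot_top Y S) (image f) (image g)"
    unfolding homeomorphic_maps_def
  proof (intro conjI ballI)
    show "continuous_map (quot_top X R) (quot_top Y S) (image f)" using quot_cont[of X Y f g R S] h RS by blast
    show "continuous_map (quot_top Y S) (quot_top X R) (image g)" using quot_cont[of Y X g f S R] h' SR by blast
  next
    fix C assume "C \<in> topspace (quot_top X R)"
    then have "C \<subseteq> topspace X" unfolding quot_topspace by blast
    then have "\<And>x. x \<in> C \<Longrightarrow> g (f x) = x" using gf by blast
    then have "(\<lambda>x. g (f x)) ` C = (\<lambda>x. x) ` C" by (rule image_cong[OF refl])
    then show "g ` f ` C = C" by (simp add: image_image)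
  next
    fix C assume "C \<in> topspace (quot_top Y S)"
    then have "C \<subseteq> topspace Y" unfolding quot_topspace by blast
    then have "\<And>x. x \<in> C \<Longrightarrow> f (g x) = x" using fg by blast
    then have "(\<lambda>x. f (g x)) ` C = (\<lambda>x. x) ` C" by (rule image_cong[OF refl])
    then show "f ` g ` C = C" by (simp add: image_image)
  qed
  then show ?thesis unfolding homeomorphic_space_def by blast
qed


lemma back_lem:
  assumes g: "g \<in> SU2" and h: "h \<in> SU2" and p: "phi h = phi (g ** E t)"
    and k: "- t = of_int k * pi"
  shows "approx_rel g h"
proof -
  obtain a b c where abc: "a \<in> {0..pi}" "b \<in> {0..<2*pi}" "g = euler a b c"
    using euler_exists[OF g] by blast
  have "h = g ** E t" using phi_inj[OF h SU2_E[OF g] p] .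
  then have "h = euler a b (c + t)" using abc(3) euler_shift by simp
  moreover have "c - (c + t) = of_int k * pi" using k by simp
  ultimately show ?thesis unfolding approx_rel_def using abc by blast
qed

lemma omega4:
  fixes w :: complex
  assumes "w ^ 4 = 1"
  shows "w = 1 \<or> w = -1 \<or> w = \<i> \<or> w = - \<i>"
proof -
  have "(w - 1) * (w + 1) * (w - \<i>) * (w + \<i>) = w ^ 4 - 1"
    by (simp add: algebra_simps eval_nat_numeral)
  then have "(w - 1) * (w + 1) * (w - \<i>) * (w + \<i>) = 0" using assms by simp
  then show ?thesis by (auto simp: add_eq_0_iff2)
qed

lemma rel_equiv:
  assumes g: "g \<in> SU2" and h: "h \<in> SU2"
  shows "approx_rel g h \<longleftrightarrow> lens_rel 4 1 (phi g) (phi h)"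
proof
  assume "approx_rel g h"
  then obtain a b c1 c2 k where ab: "g = euler a b c1" "h = euler a b c2" and k: "c1 - c2 = of_int k * pi"
    unfolding approx_rel_def by blast
  have "c1 = c2 + of_int k * pi" using k by simp
  then have "g = h ** E (of_int k * pi)" using ab euler_shift by simp
  then have pg: "phi g = (cis (of_int k * pi / 2) * fst (phi h), cis (of_int k * pi / 2) * snd (phi h))"
    using phi_E by simp
  have "cis (of_int k * pi / 2) ^ 4 = cis (2 * pi * of_int k)"
    unfolding Complex.DeMoivre by (simp add: algebra_simps)
  also have "\<dots> = 1" by (rule cis_multiple_2pi) simp
  finally have "cis (of_int k * pi / 2) powi 4 = 1" by simp
  then show "lens_rel 4 1 (phi g) (phi h)" unfolding lens_rel_def using pg by auto
next
  assume "lens_rel 4 1 (phi g) (phi h)"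
  then obtain w where w4: "w powi 4 = 1" and f: "fst (phi g) = w * fst (phi h)" and s: "snd (phi g) = w * snd (phi h)"
    unfolding lens_rel_def by auto
  have w: "w = 1 \<or> w = -1 \<or> w = \<i> \<or> w = - \<i>" using w4 by (intro omega4) simp
  have key: "approx_rel g h" if t: "cis (t/2) * w = 1" and k: "- t = of_int k * pi" for t k
  proof (rule back_lem[OF g h _ k])
    have "phi (g ** E t) = (cis (t/2) * w * fst (phi h), cis (t/2) * w * snd (phi h))"
      unfolding phi_E f s by (simp add: mult.assoc)
    then show "phi h = phi (g ** E t)" using t by simp
  qed
  from w show "approx_rel g h"
  proof (elim disjE)
    assume "w = 1" then show ?thesis using key[of 0 0] by simp
  next
    assume "w = -1" then show ?thesis using key[of "2*pi" "-2"] by (simp add: complex_eq_iff)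
  next
    assume "w = \<i>" then show ?thesis using key[of "-pi" 1] by (simp add: complex_eq_iff)
  next
    assume "w = - \<i>" then show ?thesis using key[of "pi" "-1"] by (simp add: complex_eq_iff)
  qed
qed

theorem proposition2:
  shows "quot_top (subtopology euclidean SU2) approx_rel homeomorphic_space lens_space 4 1"
  unfolding lens_space_def
  by (rule quot_homeo[OF homeo_phi]) (simp add: rel_equiv)

end
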